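(* Let $\mathcal K$ be a finite-dimensional complex Hilbert space and let $U$ be a unitary on $\mathbb C^2\otimes\mathcal K$. Define $K=(\langle0|\otimes I)\,U\,(|0\rangle\otimes I)$, so that $U(|0\rangle\otimes|\varphi\rangle)=|0\rangle\otimes K|\varphi\rangle+|1\rangle\otimes|\mathrm{junk}_\varphi\rangle$ for every $|\varphi\rangle\in\mathcal K$. Suppose $K$ is an orthogonal projector. Let $\tilde U$ be any unitary on $\mathbb C^2\otimes\mathcal K$, let $K'=(\langle0|\otimes I)\,\tilde U\,(|0\rangle\otimes I)$, and suppose that $\tilde U$ preserves the action of $K$ up to a scalar, i.e. for every $|\varphi\rangle\in\mathcal K$ there is a scalar $\lambda(\varphi)\in\mathbb C$ with $K'|\varphi\rangle=\lambda(\varphi)K|\varphi\rangle$. Then for every $|\varphi\rangle\in\mathcal K$, $\|K'|\varphi\rangle\|^2\le\|K|\varphi\rangle\|^2$; that is, the success probability of post-selecting the ancilla in $|0\rangle$ cannot be increased.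
   Context: $\|K|\varphi\rangle\|^2$ is the probability of obtaining outcome $0$ when measuring the ancilla (first tensor factor) after applying $U$ to $|0\rangle\otimes|\varphi\rangle$ for a normalized $|\varphi\rangle$; $\tilde U$ models an (oblivious) amplitude amplification protocol. *)

theory Defs
  imports "HOL-Analysis.Analysis"
begin

text \<open>Finite-dimensional complex Hilbert space K = complex ^ 'n (standard inner product);
  C^2 \<otimes> K = complex ^ (2 \<times> 'n), basis vector |a> \<otimes> |i> indexed by (a,i), a :: 2.
  Operators are square matrices acting by *v.\<close>

definition cadj :: "complex ^ 'm ^ 'k \<Rightarrow> complex ^ 'k ^ 'm" where
  "cadj A = (\<chi> i j. cnj (A $ j $ i))"

definition unitary_mat :: "complex ^ 'k ^ 'k \<Rightarrow> bool" where
  "unitary_mat U \<longleftrightarrow> U ** cadj U = mat 1 \<and> cadj U ** U = mat 1"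

definition orth_projector :: "complex ^ 'k ^ 'k \<Rightarrow> bool" where
  "orth_projector P \<longleftrightarrow> P ** P = P \<and> cadj P = P"

definition anc0_block :: "complex ^ (2 \<times> 'n) ^ (2 \<times> 'n) \<Rightarrow> complex ^ 'n ^ 'n" where
  "anc0_block U = (\<chi> i j. U $ (0, i) $ (0, j))"

end

theory Submission imports Defs begin
lemma normsq_c: "complex_of_real ((norm (y::complex^'k::finite))^2) = (\<Sum>i\<in>UNIV. y$i * cnj (y$i))"
proof -
  have "(norm y)^2 = (\<Sum>i\<in>UNIV. (norm (y$i))^2)" by (simp add: norm_vec_def L2_set_def sum_nonneg)
  hence "complex_of_real ((norm y)^2) = (\<Sum>i\<in>UNIV. complex_of_real ((norm (y$i))^2))"
    by (simp only: of_real_sum)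
  also have "\<dots> = (\<Sum>i\<in>UNIV. y$i * cnj (y$i))" by (simp only: complex_norm_square)
  finally show ?thesis .
qed

lemma unit_pres:
  fixes U :: "complex^'k::finite^'k"
  assumes "unitary_mat U"
  shows "norm (U *v x) = norm x"
proof -
  have D: "(\<Sum>i\<in>UNIV. cnj (U$i$l) * U$i$j) = (if l = j then 1 else 0)" for l j
  proof -
    have "(cadj U ** U) $ l $ j = (mat 1 :: complex^'k^'k) $ l $ j" using assms unfolding unitary_mat_def by simp
    thus ?thesis by (simp add: matrix_matrix_mult_def cadj_def mat_def)
  qed
  have "(\<Sum>i\<in>UNIV. (U *v x)$i * cnj ((U *v x)$i))
     = (\<Sum>i\<in>UNIV. \<Sum>j\<in>UNIV. \<Sum>l\<in>UNIV. (U$i$j * x$j) * (cnj (U$i$l) * cnj (x$l)))"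
    by (simp add: matrix_vector_mult_def sum_product)
  also have "\<dots> = (\<Sum>j\<in>UNIV. \<Sum>l\<in>UNIV. \<Sum>i\<in>UNIV. (U$i$j * x$j) * (cnj (U$i$l) * cnj (x$l)))"
    by (subst sum.swap, rule sum.cong, simp, rule sum.swap)
  also have "\<dots> = (\<Sum>j\<in>UNIV. \<Sum>l\<in>UNIV. (x$j * cnj (x$l)) * (\<Sum>i\<in>UNIV. cnj (U$i$l) * U$i$j))"
    by (simp add: sum_distrib_left mult_ac)
  also have "\<dots> = (\<Sum>j\<in>UNIV. \<Sum>l\<in>UNIV. if l = j then x$j * cnj (x$l) else 0)"
    by (intro sum.cong) (auto simp: D)
  also have "\<dots> = (\<Sum>j\<in>UNIV. x$j * cnj (x$j))"
    by simp
  finally have "complex_of_real ((norm (U *v x))^2) = complex_of_real ((norm x)^2)"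
    by (simp only: normsq_c)
  hence "(norm (U *v x))^2 = (norm x)^2" using of_real_eq_iff by blast
  thus ?thesis by (simp add: power2_eq_iff_nonneg)
qed

lemma contr:
  fixes Ut :: "complex ^ (2 \<times> 'n::finite) ^ (2 \<times> 'n)"
  assumes "unitary_mat Ut"
  shows "norm (anc0_block Ut *v psi) \<le> norm psi"
proof -
  define X :: "complex ^ (2 \<times> 'n)" where "X = (\<chi> p. if fst p = 0 then psi $ snd p else 0)"
  have comp: "(anc0_block Ut *v psi) $ i = (Ut *v X) $ (0, i)" for i
  proof -
    have "(Ut *v X) $ (0, i) = (\<Sum>p\<in>UNIV. Ut$(0,i)$p * X$p)" by (simp add: matrix_vector_mult_def)
    also have "\<dots> = (\<Sum>a\<in>UNIV. \<Sum>j\<in>UNIV. Ut$(0,i)$(a,j) * X$(a,j))"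
      by (simp add: UNIV_Times_UNIV[symmetric] sum.cartesian_product del: UNIV_Times_UNIV)
    also have "\<dots> = (\<Sum>a\<in>UNIV. if (a::2) = 0 then (\<Sum>j\<in>UNIV. Ut$(0,i)$(0,j) * psi$j) else 0)"
      by (rule sum.cong[OF refl]) (auto simp: X_def)
    also have "\<dots> = (\<Sum>j\<in>UNIV. Ut$(0,i)$(0,j) * psi$j)"
      by simp
    finally show ?thesis by (simp add: matrix_vector_mult_def anc0_block_def)
  qed
  have nX: "(norm X)^2 = (norm psi)^2"
  proof -
    have "(norm X)^2 = (\<Sum>p\<in>UNIV. (norm (X$p))^2)" by (simp add: norm_vec_def L2_set_def sum_nonneg)
    also have "\<dots> = (\<Sum>a\<in>UNIV. \<Sum>j\<in>UNIV. (norm (X$(a,j)))^2)"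
      by (simp add: UNIV_Times_UNIV[symmetric] sum.cartesian_product del: UNIV_Times_UNIV)
    also have "\<dots> = (\<Sum>a\<in>UNIV. if (a::2) = 0 then (\<Sum>j\<in>UNIV. (norm (psi$j))^2) else 0)"
      by (rule sum.cong[OF refl]) (auto simp: X_def)
    also have "\<dots> = (\<Sum>j\<in>UNIV. (norm (psi$j))^2)"
      by simp
    also have "\<dots> = (norm psi)^2" by (simp add: norm_vec_def L2_set_def sum_nonneg)
    finally show ?thesis .
  qed
  have "(norm (anc0_block Ut *v psi))^2 = (\<Sum>j\<in>UNIV. (norm ((Ut *v X)$(0,j)))^2)"
    by (simp add: norm_vec_def L2_set_def sum_nonneg comp)
  also have "\<dots> \<le> (\<Sum>a\<in>UNIV. \<Sum>j\<in>UNIV. (norm ((Ut *v X)$(a,j)))^2)"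
    by (rule member_le_sum) (auto intro: sum_nonneg)
  also have "\<dots> = (\<Sum>p\<in>UNIV. (norm ((Ut *v X)$p))^2)"
      by (simp add: UNIV_Times_UNIV[symmetric] sum.cartesian_product del: UNIV_Times_UNIV)
  also have "\<dots> = (norm (Ut *v X))^2" by (simp add: norm_vec_def L2_set_def sum_nonneg)
  also have "\<dots> = (norm psi)^2" using unit_pres[OF assms] nX by simp
  finally show ?thesis using power2_le_imp_le by force
qed

theorem lemma1:
  fixes U Ut :: "complex ^ (2 \<times> 'n::finite) ^ (2 \<times> 'n)"
  assumes "unitary_mat U"
    and "orth_projector (anc0_block U)"
    and "unitary_mat Ut"
    and "\<forall>\<phi> :: complex ^ 'n. \<exists>c :: complex.
           anc0_block Ut *v \<phi> = c *s (anc0_block U *v \<phi>)"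
  shows "\<forall>\<phi> :: complex ^ 'n.
           (norm (anc0_block Ut *v \<phi>))\<^sup>2 \<le> (norm (anc0_block U *v \<phi>))\<^sup>2"
proof
  fix \<phi> :: "complex ^ 'n"
  define P where "P = anc0_block U"
  define Q where "Q = anc0_block Ut"
  have PP: "P ** P = P" using assms(2) by (simp add: orth_projector_def P_def)
  have z: "P *v (\<phi> - P *v \<phi>) = 0"
    by (simp add: matrix_vector_mult_diff_distrib matrix_vector_mul_assoc PP)
  obtain c where "Q *v (\<phi> - P *v \<phi>) = c *s (P *v (\<phi> - P *v \<phi>))"
    using assms(4) Q_def P_def by blast
  hence "Q *v (\<phi> - P *v \<phi>) = 0" using z by simp
  hence "Q *v \<phi> = Q *v (P *v \<phi>)" by (simp add: matrix_vector_mult_diff_distrib)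
  moreover have "norm (Q *v (P *v \<phi>)) \<le> norm (P *v \<phi>)" unfolding Q_def by (rule contr[OF assms(3)])
  ultimately have "norm (Q *v \<phi>) \<le> norm (P *v \<phi>)" by simp
  thus "(norm (anc0_block Ut *v \<phi>))\<^sup>2 \<le> (norm (anc0_block U *v \<phi>))\<^sup>2"
    unfolding P_def Q_def by (simp add: power_mono)
qed
end
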